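(* Let $a>0$. Then the function $$[0,1]\ni x\mapsto\bigl[\sinh(a)\cos(a)+\cosh(a)\sin(a)\bigr]\cosh(ax)\cos(ax)-\bigl[\sinh(a)\cos(a)-\cosh(a)\sin(a)\bigr]\sinh(ax)\sin(ax)$$ attains its maximum on $[0,1]$ at $x=1$. *)

theory Defs
  imports Complex_Main
begin

end

theory Submission
  imports Defs
begin

lemma t_le_sinh: assumes "(0::real) \<le> t" shows "t \<le> sinh t"
proof -
  have "\<exists>y. DERIV (\<lambda>t. sinh t - t) x :> y \<and> 0 \<le> y" for x :: real
  proof -
    have "DERIV (\<lambda>t. sinh t - t) x :> cosh x - 1" by (auto intro!: derivative_eq_intros)
    moreover have "0 \<le> cosh x - 1" using cosh_real_ge_1[of x] by simp
    ultimately show "\<exists>y. DERIV (\<lambda>t. sinh t - t) x :> y \<and> 0 \<le> y" by blast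
  qed
  from DERIV_nonneg_imp_nondecreasing[OF assms this] show ?thesis by simp
qed

lemma sin_le_sinh: assumes "(0::real) \<le> t" shows "sin t \<le> sinh t"
  using t_le_sinh[OF assms] sin_x_le_x[OF assms] by linarith

lemma cos_le_cosh: "cos (t::real) \<le> cosh t"
  using cosh_real_ge_1[of t] cos_le_one[of t] by linarith

lemma key:
  fixes u v :: real
  shows "sinh (u+v) + sin (u+v) - (sinh u * cos v + sinh v * cos u + cosh u * sin v + cosh v * sin u)
    = (sinh u - sin u) * (cosh v - cos v) + (cosh u - cos u) * (sinh v - sin v)"
  by (simp add: sinh_add sin_add algebra_simps)

theorem corollaryC4:
  fixes a :: real
  assumes "a > 0"
  defines "f \<equiv> (\<lambda>x::real.
      (sinh a * cos a + cosh a * sin a) * cosh (a * x) * cos (a * x)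
    - (sinh a * cos a - cosh a * sin a) * sinh (a * x) * sin (a * x))"
  shows "\<forall>x\<in>{0..1}. f x \<le> f 1"
proof
  fix x :: real assume x: "x \<in> {0..1}"
  define u where "u = a + a * x"
  define v where "v = a - a * x"
  have u0: "0 \<le> u" using assms x by (simp add: u_def)
  have v0: "0 \<le> v" using assms x by (simp add: v_def mult_left_le)
  have fx: "2 * f x = sinh u * cos v + sinh v * cos u + cosh u * sin v + cosh v * sin u"
    unfolding f_def u_def v_def
    unfolding sinh_add sinh_diff cosh_add cosh_diff sin_add sin_diff cos_add cos_diff
    by (simp add: algebra_simps)
  have f1: "2 * f 1 = sinh (u+v) + sin (u+v)"
  proof -
    have "u + v = a + a" by (simp add: u_def v_def)
    moreover have "2 * f 1 = sinh (a+a) + sin (a+a)"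
    proof -
      have "f 1 = sinh a * cosh a * (cos a ^ 2 + sin a ^ 2) + cos a * sin a * (cosh a ^ 2 - sinh a ^ 2)"
        unfolding f_def power2_eq_square by (simp only: mult_1_right) algebra
      also have "\<dots> = sinh a * cosh a + cos a * sin a"
      proof -
        have "cos a ^ 2 + sin a ^ 2 = 1" "cosh a ^ 2 - sinh a ^ 2 = 1"
          using cosh_square_eq[of a] sin_cos_squared_add2[of a] by simp_all
        then show ?thesis by (simp only: mult_1_right)
      qed
      finally show ?thesis unfolding sinh_add sin_add by (simp add: algebra_simps)
    qed
    ultimately show ?thesis by simp
  qed
  have "0 \<le> (sinh u - sin u) * (cosh v - cos v) + (cosh u - cos u) * (sinh v - sin v)"
    using sin_le_sinh[OF u0] sin_le_sinh[OF v0] cos_le_cosh[of u] cos_le_cosh[of v]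
    by (intro add_nonneg_nonneg mult_nonneg_nonneg) auto
  with key[of u v] fx f1 show "f x \<le> f 1" by linarith
qed

end
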